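(* Let $\mathcal{C}_{h,\theta}$ be a hyperbolic cone with $\theta<\pi$. There exist $d>0$ and a cone neighbourhood $U_d$ of the cone-point with the following property: if $x,y$ are two points of $\mathcal{C}_{h,\theta}$ at distance $d$ from the cone-point, then the geodesic joining $x$ and $y$ does not intersect $U_d$.
   Context: For $\theta\in(0,2\pi)$ and $h>0$, let $\mathcal{S}_{h,\theta}=\{z\in\mathbb{D}: d_{\mathbb{D}}(0,z)\le h,\ 0\le\arg z\le\theta\}$ in the Poincaré disk. The hyperbolic cone $\mathcal{C}_{h,\theta}$ with cone-angle $\theta$ and slant height $h$ is the quotient of $\mathcal{S}_{h,\theta}$ obtained by gluing the segments $\arg z=0$ and $\arg z=\theta$ via $z\mapsto e^{i\theta}z$; the image of $0$ is the cone-point. A cone neighbourhood of the cone-point is a set of points at distance less than some $r>0$ from it. *)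

theory Defs
  imports "HOL-Analysis.Analysis"
begin

definition dD :: "complex \<Rightarrow> complex \<Rightarrow> real" where
  "dD z w = 2 * artanh (cmod (z - w) / cmod (1 - cnj z * w))"

definition sector :: "real \<Rightarrow> real \<Rightarrow> complex set" where
  "sector h \<theta> = {z. cmod z < 1 \<and> dD 0 z \<le> h \<and>
      (\<exists>\<rho> \<phi>. 0 \<le> \<rho> \<and> 0 \<le> \<phi> \<and> \<phi> \<le> \<theta> \<and> z = complex_of_real \<rho> * cis \<phi>)}"

definition cone_rel :: "real \<Rightarrow> real \<Rightarrow> (complex \<times> complex) set" where
  "cone_rel h \<theta> = {(z, w). z \<in> sector h \<theta> \<and> w \<in> sector h \<theta> \<and>
      (z = w
       \<or> (\<exists>\<rho>\<ge>0. z = complex_of_real \<rho> \<and> w = cis \<theta> * complex_of_real \<rho>)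
       \<or> (\<exists>\<rho>\<ge>0. w = complex_of_real \<rho> \<and> z = cis \<theta> * complex_of_real \<rho>))}"

definition cone :: "real \<Rightarrow> real \<Rightarrow> complex set set" where
  "cone h \<theta> = sector h \<theta> // cone_rel h \<theta>"

definition cone_point :: "real \<Rightarrow> real \<Rightarrow> complex set" where
  "cone_point h \<theta> = cone_rel h \<theta> `` {0}"

definition cone_dist :: "real \<Rightarrow> real \<Rightarrow> complex set \<Rightarrow> complex set \<Rightarrow> real" where
  "cone_dist h \<theta> p q = Inf {(\<Sum>i\<le>n. dD (x i) (y i)) | n x y.
      x 0 \<in> p \<and> y n \<in> q \<and>
      (\<forall>i\<le>n. x i \<in> sector h \<theta> \<and> y i \<in> sector h \<theta>) \<and>
      (\<forall>i<n. (y i, x (Suc i)) \<in> cone_rel h \<theta>)}"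

definition cone_geodesic :: "real \<Rightarrow> real \<Rightarrow> (real \<Rightarrow> complex set) \<Rightarrow> complex set \<Rightarrow> complex set \<Rightarrow> bool" where
  "cone_geodesic h \<theta> \<gamma> p q \<longleftrightarrow>
     \<gamma> 0 = p \<and> \<gamma> (cone_dist h \<theta> p q) = q \<and>
     (\<forall>t\<in>{0..cone_dist h \<theta> p q}. \<gamma> t \<in> cone h \<theta>) \<and>
     (\<forall>s\<in>{0..cone_dist h \<theta> p q}. \<forall>t\<in>{0..cone_dist h \<theta> p q}.
        cone_dist h \<theta> (\<gamma> s) (\<gamma> t) = \<bar>s - t\<bar>)"

end

theory Submission
  imports Defs "HOL-Analysis.Analysis"
begin


lemma artanh_mono_le:
  fixes x y :: real assumes "-1 < x" "x \<le> y" "y < 1"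
  shows "artanh x \<le> artanh y"
proof -
  have "(1+x)/(1-x) \<le> (1+y)/(1-y)" using assms by (simp add: divide_simps algebra_simps)
  moreover have "0 < (1+x)/(1-x)" using assms by simp
  ultimately show ?thesis unfolding artanh_def by simp
qed

lemma artanh_mono_less:
  fixes x y :: real assumes "-1 < x" "x < y" "y < 1"
  shows "artanh x < artanh y"
proof -
  have "(1+x)/(1-x) < (1+y)/(1-y)" using assms by (simp add: divide_simps algebra_simps)
  moreover have "0 < (1+x)/(1-x)" using assms by simp
  ultimately show ?thesis unfolding artanh_def by simp
qed

lemma artanh_add:
  fixes x y :: real assumes "0 \<le> x" "x < 1" "0 \<le> y" "y < 1"
  shows "artanh x + artanh y = artanh ((x+y)/(1+x*y))"
proof -
  have p: "1 + x*y > 0" using assms by (simp add: add_pos_nonneg)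
  have e: "(1 + (x+y)/(1+x*y)) / (1 - (x+y)/(1+x*y)) = ((1+x)/(1-x)) * ((1+y)/(1-y))"
  proof -
    have a: "1 + (x+y)/(1+x*y) = (1+x)*(1+y)/(1+x*y)" using p by (simp add: field_simps)
    have b: "1 - (x+y)/(1+x*y) = (1-x)*(1-y)/(1+x*y)" using p by (simp add: field_simps)
    have "1-x \<noteq> 0" "1-y \<noteq> 0" using assms by auto
    then show ?thesis unfolding a b using p by simp
  qed
  have pp: "0 < (1+x)/(1-x)" "0 < (1+y)/(1-y)" using assms by auto
  have "ln ((1+x)/(1-x)) + ln ((1+y)/(1-y)) = ln ((1 + (x+y)/(1+x*y)) / (1 - (x+y)/(1+x*y)))"
    unfolding e ln_mult using pp assms by simp
  then show ?thesis unfolding artanh_def by (simp add: add_divide_distrib[symmetric])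
qed

lemma artanh_nonneg: fixes x :: real assumes "0 \<le> x" "x < 1" shows "0 \<le> artanh x"
  using artanh_mono_le[of 0 x] assms by simp

lemma artanh_pos: fixes x :: real assumes "0 < x" "x < 1" shows "0 < artanh x"
  using artanh_mono_less[of 0 x] assms by simp

lemma artanh_double:
  fixes x :: real assumes "0 \<le> x" "x < 1"
  shows "2 * artanh x = artanh (2*x/(1+x^2))"
  using artanh_add[OF assms assms] by (simp add: power2_eq_square)




lemma disk_id: "(cmod (1 - cnj a * b))^2 - (cmod (a - b))^2 = (1 - (cmod a)^2) * (1 - (cmod b)^2)"
  by (simp only: cmod_power2) (simp add: power2_eq_square algebra_simps)

lemma disk_lt: assumes "cmod a < 1" "cmod b < 1"
  shows "cmod (a - b) < cmod (1 - cnj a * b)"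
proof -
  have "(1 - (cmod a)^2) * (1 - (cmod b)^2) > 0" using assms
    by (simp add: abs_square_less_1)
  then have "(cmod (a - b))^2 < (cmod (1 - cnj a * b))^2" using disk_id[of a b] by linarith
  then show ?thesis using power2_less_imp_less by fastforce
qed

lemma dD_ratio: assumes "cmod a < 1" "cmod b < 1"
  shows "0 \<le> cmod (a - b) / cmod (1 - cnj a * b)" "cmod (a - b) / cmod (1 - cnj a * b) < 1"
proof -
  have "0 < cmod (1 - cnj a * b)" using disk_lt[OF assms] by (meson le_less_trans norm_ge_zero)
  then show "0 \<le> cmod (a - b) / cmod (1 - cnj a * b)" "cmod (a - b) / cmod (1 - cnj a * b) < 1"
    using disk_lt[OF assms] by auto
qed

lemma dD_nonneg: assumes "cmod a < 1" "cmod b < 1" shows "0 \<le> dD a b"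
  unfolding dD_def using dD_ratio[OF assms] artanh_nonneg by simp

lemma dD_0: "dD 0 b = 2 * artanh (cmod b)"
  unfolding dD_def by simp

lemma mod_bound: assumes "cmod a < 1" "cmod b < 1"
  shows "cmod b \<le> (cmod a + cmod (a - b) / cmod (1 - cnj a * b)) / (1 + cmod a * (cmod (a - b) / cmod (1 - cnj a * b)))"
proof -
  define \<alpha> where "\<alpha> = cmod a"
  define \<beta> where "\<beta> = cmod b"
  define P where "P = cmod (1 - cnj a * b)"
  define N where "N = cmod (a - b)"
  have P: "P > N" "N \<ge> 0" unfolding P_def N_def using disk_lt[OF assms] by auto
  have id: "P^2 - N^2 = (1 - \<alpha>^2) * (1 - \<beta>^2)" unfolding P_def N_def \<alpha>_def \<beta>_def by (rule disk_id)
  have "1 - cnj a * a = (1 - cnj a * b) + cnj a * (b - a)" by (simp add: algebra_simps)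
  then have "cmod (1 - cnj a * a) \<le> P + \<alpha> * cmod (b - a)" unfolding P_def \<alpha>_def
    by (metis complex_mod_cnj norm_mult norm_triangle_ineq)
  moreover have "cmod (1 - cnj a * a) = 1 - \<alpha>^2"
  proof -
    have "cnj a * a = complex_of_real (\<alpha>^2)" unfolding \<alpha>_def by (metis complex_norm_square mult.commute of_real_power)
    then have "1 - cnj a * a = complex_of_real (1 - \<alpha>^2)" by (metis of_real_1 of_real_diff)
    moreover have "\<alpha>^2 \<le> 1" unfolding \<alpha>_def using assms by (simp add: power_le_one)
    ultimately show ?thesis by (metis abs_of_nonneg diff_ge_0_iff_ge norm_of_real)
  qed
  moreover have "cmod (b - a) = N" unfolding N_def by (simp add: norm_minus_commute)
  ultimately have tri: "1 - \<alpha>^2 \<le> P + \<alpha> * N" by simp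
  have a0: "0 \<le> \<alpha>" "\<alpha> < 1" "0 \<le> \<beta>" "\<beta> < 1" using assms unfolding \<alpha>_def \<beta>_def by auto
  have q0: "0 \<le> 1 - \<alpha>^2" "0 \<le> 1 - \<beta>^2" using a0 by (auto simp: power_le_one abs_square_le_1)
  have e: "(\<alpha>*P+N)^2 = (P+\<alpha>*N)^2 - (1-\<alpha>^2)^2*(1-\<beta>^2)"
  proof -
    have "(P+\<alpha>*N)^2 - (\<alpha>*P+N)^2 = (1-\<alpha>^2)*(P^2-N^2)" by (simp add: algebra_simps power2_eq_square)
    then have "(\<alpha>*P+N)^2 = (P+\<alpha>*N)^2 - (1-\<alpha>^2)*(P^2-N^2)" by linarith
    also have "\<dots> = (P+\<alpha>*N)^2 - (1-\<alpha>^2)*((1 - \<alpha>^2) * (1 - \<beta>^2))" unfolding id ..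
    finally show ?thesis by (metis power2_eq_square mult.assoc)
  qed
  have "(1-\<alpha>^2)^2*(1-\<beta>^2) \<le> (P+\<alpha>*N)^2*(1-\<beta>^2)"
    using tri q0 by (intro mult_right_mono power_mono) auto
  moreover have "(P+\<alpha>*N)^2*(1-\<beta>^2) = (P+\<alpha>*N)^2 - \<beta>^2 * (P+\<alpha>*N)^2"
    by (rule left_diff_distrib[of 1 "\<beta>^2" "(P+\<alpha>*N)^2", simplified mult_1_left, THEN trans[OF mult.commute]])
  ultimately have "\<beta>^2 * (P+\<alpha>*N)^2 \<le> (\<alpha>*P+N)^2" using e by linarith
  then have "(\<beta> * (P+\<alpha>*N))^2 \<le> (\<alpha>*P+N)^2" by (simp add: power_mult_distrib)
  moreover have "0 \<le> \<alpha>*P+N" using a0 P by simp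
  ultimately have "\<beta> * (P+\<alpha>*N) \<le> \<alpha>*P+N" by (rule power2_le_imp_le)
  moreover have "P + \<alpha>*N > 0" using P a0 by (simp add: add_pos_nonneg)
  ultimately have "\<beta> \<le> (\<alpha>*P+N)/(P+\<alpha>*N)" by (simp add: pos_le_divide_eq)
  also have "\<dots> = (\<alpha> + N/P)/(1 + \<alpha>*(N/P))"
  proof -
    have Pz: "P \<noteq> 0" using P by simp
    have h1: "\<alpha> + N/P = (\<alpha>*P+N)/P" and h2: "1 + \<alpha>*(N/P) = (P+\<alpha>*N)/P" using Pz by (simp_all add: field_simps)
    show ?thesis unfolding h1 h2 using Pz by simp
  qed
  finally show ?thesis unfolding \<alpha>_def \<beta>_def P_def N_def .
qed

lemma dD_tri0: assumes "cmod a < 1" "cmod b < 1"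
  shows "dD 0 b \<le> dD 0 a + dD a b"
proof -
  define \<delta> where "\<delta> = cmod (a - b) / cmod (1 - cnj a * b)"
  have d: "0 \<le> \<delta>" "\<delta> < 1" unfolding \<delta>_def using dD_ratio[OF assms] by auto
  have a: "0 \<le> cmod a" "cmod a < 1" using assms by auto
  have X: "(cmod a + \<delta>)/(1 + cmod a*\<delta>) < 1"
  proof -
    have "0 < (1 - cmod a)*(1-\<delta>)" using a d by simp
    then show ?thesis using a d by (simp add: field_simps add_pos_nonneg)
  qed
  have "artanh (cmod b) \<le> artanh ((cmod a + \<delta>)/(1 + cmod a*\<delta>))"
  proof (rule artanh_mono_le)
    show "-1 < cmod b" by (smt (verit) norm_ge_zero)
    show "cmod b \<le> (cmod a + \<delta>)/(1 + cmod a*\<delta>)" using mod_bound[OF assms] unfolding \<delta>_def .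
  qed (use X in auto)
  also have "\<dots> = artanh (cmod a) + artanh \<delta>" using artanh_add[OF a d] by simp
  finally show ?thesis unfolding dD_0 unfolding dD_def \<delta>_def by simp
qed



lemma poly1: "(r*ca - r*cb)^2 + (r * sa - r * sb)^2 = r^2 * ((sa^2+ca^2) + (sb^2+cb^2) - 2*(ca*cb + sa * sb))" for r ca cb sa sb :: real
  by (simp add: power2_eq_square algebra_simps)

lemma poly2: "(1 - r*c)^2 + (r * s)^2 = 1 - 2*r*c + r^2*(s^2+c^2)" for r c s :: real
  by (simp add: power2_eq_square algebra_simps)

lemma N2: "(cmod (complex_of_real \<rho> * cis a - complex_of_real \<rho> * cis b))^2 = \<rho>^2 * (2 - 2*cos (a - b))"
proof -
  have "(cmod (complex_of_real \<rho> * cis a - complex_of_real \<rho> * cis b))^2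
      = (\<rho>*cos a - \<rho>*cos b)^2 + (\<rho> * sin a - \<rho> * sin b)^2"
    by (simp only: cmod_power2) simp
  also have "\<dots> = \<rho>^2 * (2 - 2*cos (a - b))" unfolding poly1 sin_cos_squared_add cos_diff by simp
  finally show ?thesis .
qed

lemma P2: "(cmod (1 - cnj (complex_of_real \<rho> * cis a) * (complex_of_real \<rho> * cis b)))^2 = 1 - 2*\<rho>^2*cos (a - b) + \<rho>^4"
proof -
  have "cnj (complex_of_real \<rho> * cis a) * (complex_of_real \<rho> * cis b) = complex_of_real (\<rho>^2) * cis (b - a)"
    by (simp add: cis_mult cis_cnj power2_eq_square[symmetric] flip: cis_inverse) (simp add: power2_eq_square cis_divide[symmetric] divide_inverse mult.assoc mult.left_commute)
  then have "(cmod (1 - cnj (complex_of_real \<rho> * cis a) * (complex_of_real \<rho> * cis b)))^2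
     = (1 - \<rho>^2 * cos (b - a))^2 + (\<rho>^2 * sin (b - a))^2"
    by (simp add: cmod_power2)
  also have "\<dots> = 1 - 2*\<rho>^2*cos (b - a) + \<rho>^4" unfolding poly2 sin_cos_squared_add by (simp add: power2_eq_square power4_eq_xxxx)
  also have "cos (b - a) = cos (a - b)" by (metis cos_minus minus_diff_eq)
  finally show ?thesis by simp
qed



lemma rel_mod: "(a, b) \<in> cone_rel h \<theta> \<Longrightarrow> cmod a = cmod b"
  unfolding cone_rel_def by (auto simp: norm_mult)

lemma sector_disk: "a \<in> sector h \<theta> \<Longrightarrow> cmod a < 1"
  unfolding sector_def by auto

lemma rel_refl: "a \<in> sector h \<theta> \<Longrightarrow> (a, a) \<in> cone_rel h \<theta>"
  unfolding cone_rel_def by auto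

lemma chain_bound:
  assumes "\<forall>i\<le>n. x i \<in> sector h \<theta> \<and> y i \<in> sector h \<theta>"
    and "\<forall>i<n. (y i, x (Suc i)) \<in> cone_rel h \<theta>"
  shows "dD 0 (y n) \<le> dD 0 (x 0) + (\<Sum>i\<le>n. dD (x i) (y i))"
  using assms
proof (induction n)
  case 0
  then show ?case using dD_tri0[OF sector_disk sector_disk] by auto
next
  case (Suc n)
  have ih: "dD 0 (y n) \<le> dD 0 (x 0) + (\<Sum>i\<le>n. dD (x i) (y i))" using Suc by auto
  have "cmod (y n) = cmod (x (Suc n))" using Suc.prems(2) rel_mod by blast
  then have e: "dD 0 (y n) = dD 0 (x (Suc n))" by (simp add: dD_0)
  have "dD 0 (y (Suc n)) \<le> dD 0 (x (Suc n)) + dD (x (Suc n)) (y (Suc n))"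
    using Suc.prems(1) by (intro dD_tri0 sector_disk) auto
  then show ?case using ih e by simp
qed

lemma chain_nonneg:
  assumes "\<forall>i\<le>n. x i \<in> sector h \<theta> \<and> y i \<in> sector h \<theta>"
  shows "0 \<le> (\<Sum>i\<le>n. dD (x i) (y i))"
  using assms by (intro sum_nonneg dD_nonneg sector_disk) auto

lemma cone_dist_lower:
  assumes "u \<in> sector h \<theta>" "v \<in> sector h \<theta>"
  shows "dD 0 v - dD 0 u \<le> cone_dist h \<theta> (cone_rel h \<theta> `` {u}) (cone_rel h \<theta> `` {v})"
  unfolding cone_dist_def
proof (rule cInf_greatest)
  let ?x = "\<lambda>_::nat. u" and ?y = "\<lambda>_::nat. v"
  have "(\<Sum>i\<le>0. dD (?x i) (?y i)) \<in> {(\<Sum>i\<le>n. dD (x i) (y i)) | n x y.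
      x 0 \<in> cone_rel h \<theta> `` {u} \<and> y n \<in> cone_rel h \<theta> `` {v} \<and>
      (\<forall>i\<le>n. x i \<in> sector h \<theta> \<and> y i \<in> sector h \<theta>) \<and>
      (\<forall>i<n. (y i, x (Suc i)) \<in> cone_rel h \<theta>)}"
    apply (rule CollectI)
    apply (rule exI[of _ 0], rule exI[of _ ?x], rule exI[of _ ?y])
    using assms rel_refl by auto
  then show "{(\<Sum>i\<le>n. dD (x i) (y i)) | n x y.
      x 0 \<in> cone_rel h \<theta> `` {u} \<and> y n \<in> cone_rel h \<theta> `` {v} \<and>
      (\<forall>i\<le>n. x i \<in> sector h \<theta> \<and> y i \<in> sector h \<theta>) \<and>
      (\<forall>i<n. (y i, x (Suc i)) \<in> cone_rel h \<theta>)} \<noteq> {}" by blast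
next
  fix s assume "s \<in> {(\<Sum>i\<le>n. dD (x i) (y i)) | n x y.
      x 0 \<in> cone_rel h \<theta> `` {u} \<and> y n \<in> cone_rel h \<theta> `` {v} \<and>
      (\<forall>i\<le>n. x i \<in> sector h \<theta> \<and> y i \<in> sector h \<theta>) \<and>
      (\<forall>i<n. (y i, x (Suc i)) \<in> cone_rel h \<theta>)}"
  then obtain n x y where s: "s = (\<Sum>i\<le>n. dD (x i) (y i))" and
    c: "x 0 \<in> cone_rel h \<theta> `` {u}" "y n \<in> cone_rel h \<theta> `` {v}"
      "\<forall>i\<le>n. x i \<in> sector h \<theta> \<and> y i \<in> sector h \<theta>"
      "\<forall>i<n. (y i, x (Suc i)) \<in> cone_rel h \<theta>" by blast
  have "cmod (x 0) = cmod u" "cmod (y n) = cmod v" using c(1,2) rel_mod by (metis ImageE singletonD)+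
  then have "dD 0 (x 0) = dD 0 u" "dD 0 (y n) = dD 0 v" by (simp_all add: dD_0)
  then show "dD 0 v - dD 0 u \<le> s" using chain_bound[OF c(3,4)] s by simp
qed

lemma cone_dist_upper:
  assumes "a \<in> p" "b \<in> q" "a \<in> sector h \<theta>" "b \<in> sector h \<theta>"
  shows "cone_dist h \<theta> p q \<le> dD a b"
  unfolding cone_dist_def
proof (rule cInf_lower)
  let ?x = "\<lambda>_::nat. a" and ?y = "\<lambda>_::nat. b"
  have "(\<Sum>i\<le>0. dD (?x i) (?y i)) \<in> {(\<Sum>i\<le>n. dD (x i) (y i)) | n x y.
      x 0 \<in> p \<and> y n \<in> q \<and>
      (\<forall>i\<le>n. x i \<in> sector h \<theta> \<and> y i \<in> sector h \<theta>) \<and>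
      (\<forall>i<n. (y i, x (Suc i)) \<in> cone_rel h \<theta>)}"
    apply (rule CollectI)
    apply (rule exI[of _ 0], rule exI[of _ ?x], rule exI[of _ ?y])
    using assms by auto
  then show "dD a b \<in> {(\<Sum>i\<le>n. dD (x i) (y i)) | n x y.
      x 0 \<in> p \<and> y n \<in> q \<and>
      (\<forall>i\<le>n. x i \<in> sector h \<theta> \<and> y i \<in> sector h \<theta>) \<and>
      (\<forall>i<n. (y i, x (Suc i)) \<in> cone_rel h \<theta>)}" by simp
  show "bdd_below {(\<Sum>i\<le>n. dD (x i) (y i)) | n x y.
      x 0 \<in> p \<and> y n \<in> q \<and>
      (\<forall>i\<le>n. x i \<in> sector h \<theta> \<and> y i \<in> sector h \<theta>) \<and>
      (\<forall>i<n. (y i, x (Suc i)) \<in> cone_rel h \<theta>)}"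
    by (rule bdd_belowI[where m=0]) (use chain_nonneg in blast)
qed

lemma zero_sector: "0 \<le> h \<Longrightarrow> 0 \<le> \<theta> \<Longrightarrow> 0 \<in> sector h \<theta>"
  unfolding sector_def by (auto simp: dD_0 intro!: exI[of _ 0])

lemma cone_point_eq: "0 \<le> h \<Longrightarrow> 0 \<le> \<theta> \<Longrightarrow> cone_point h \<theta> = cone_rel h \<theta> `` {0}"
  unfolding cone_point_def by simp

lemma D_eq:
  assumes "0 \<le> h" "0 \<le> \<theta>" "u \<in> sector h \<theta>"
  shows "cone_dist h \<theta> (cone_point h \<theta>) (cone_rel h \<theta> `` {u}) = dD 0 u"
proof (rule antisym)
  show "cone_dist h \<theta> (cone_point h \<theta>) (cone_rel h \<theta> `` {u}) \<le> dD 0 u"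
    unfolding cone_point_def using assms zero_sector rel_refl
    by (intro cone_dist_upper) auto
  show "dD 0 u \<le> cone_dist h \<theta> (cone_point h \<theta>) (cone_rel h \<theta> `` {u})"
    unfolding cone_point_def using cone_dist_lower[OF zero_sector[OF assms(1,2)] assms(3)]
    by (simp add: dD_0)
qed




lemma geo_bound:
  assumes "\<theta> \<le> pi" "z \<in> sector h \<theta>" "w \<in> sector h \<theta>" "cmod z = \<rho>" "cmod w = \<rho>" "\<rho> < 1"
  shows "(cmod (z - w) / cmod (1 - cnj z * w))^2 \<le> 2*\<rho>^2*(1 - cos \<theta>) / (1 - \<rho>^2)^2"
proof -
  obtain r1 a where z: "0 \<le> r1" "0 \<le> a" "a \<le> \<theta>" "z = complex_of_real r1 * cis a"
    using assms(2) unfolding sector_def by auto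
  obtain r2 b where w: "0 \<le> r2" "0 \<le> b" "b \<le> \<theta>" "w = complex_of_real r2 * cis b"
    using assms(3) unfolding sector_def by auto
  have "r1 = \<rho>" using assms(4) z by (simp add: norm_mult)
  moreover have "r2 = \<rho>" using assms(5) w by (simp add: norm_mult)
  ultimately have zw: "z = complex_of_real \<rho> * cis a" "w = complex_of_real \<rho> * cis b" using z w by auto
  have r0: "0 \<le> \<rho>" using assms(4) by auto
  define C where "C = cos (a - b)"
  have C1: "C \<le> 1" unfolding C_def by simp
  have Ct: "cos \<theta> \<le> C"
  proof -
    have "cos \<theta> \<le> cos \<bar>a - b\<bar>" using z w assms(1) by (intro cos_monotone_0_pi_le) auto
    then show ?thesis unfolding C_def by simp
  qed
  have N: "(cmod (z - w))^2 = \<rho>^2 * (2 - 2*C)" unfolding zw C_def by (rule N2)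
  have P: "(cmod (1 - cnj z * w))^2 = 1 - 2*\<rho>^2*C + \<rho>^4" unfolding zw C_def by (rule P2)
  have Nle: "(cmod (z - w))^2 \<le> 2*\<rho>^2*(1 - cos \<theta>)"
    unfolding N using Ct by (simp add: algebra_simps mult_right_mono)
  have r2le: "\<rho>^2 * C \<le> \<rho>^2" using C1 by (simp add: mult_left_le)
  have Pge: "(1 - \<rho>^2)^2 \<le> (cmod (1 - cnj z * w))^2"
    unfolding P using r2le by (simp add: power2_eq_square power4_eq_xxxx algebra_simps)
  have pos: "0 < (1 - \<rho>^2)^2" using assms(6) r0
    by (metis abs_square_less_1 abs_of_nonneg diff_gt_0_iff_gt zero_less_power2 less_irrefl)
  show ?thesis unfolding power_divide
    by (rule frac_le) (use Nle Pge pos in auto)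
qed




lemma choice_ineq:
  fixes c \<rho> :: real
  assumes "-1 < c" "c \<le> 1" "0 < \<rho>" "\<rho>^2 \<le> (1 + c)/16"
  shows "2*\<rho>^2*(1-c)/(1-\<rho>^2)^2 < (2*\<rho>/(1+\<rho>^2))^2"
proof -
  define e where "e = \<rho>^2"
  have e0: "0 < e" "e \<le> (1 + c)/16" using assms unfolding e_def by auto
  have e1: "e < 1" using e0 assms by simp
  have key: "(1-c)*(1+e)^2 < 2*(1-e)^2"
  proof -
    define X where "X = e*(6-2*c)"
    define Y where "Y = e^2*(1+c)"
    have "2*(1-e)^2 - (1-c)*(1+e)^2 = (1+c) - X + Y" unfolding X_def Y_def by (simp add: power2_eq_square algebra_simps)
    moreover have "X \<le> e*8" unfolding X_def using assms e0 by (intro mult_left_mono) auto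
    moreover have "0 \<le> Y" unfolding Y_def using assms by simp
    moreover have "0 < (1+c) - X + Y" using calculation(2,3) assms(1) e0(2) by argo
    ultimately have "0 < 2*(1-e)^2 - (1-c)*(1+e)^2" by simp
    then show ?thesis by simp
  qed
  have d1: "0 < (1-e)^2" "0 < (1+e)^2" using e1 e0 by auto
  have "(2*\<rho>/(1+\<rho>^2))^2 = 4*e/(1+e)^2" unfolding e_def by (simp add: power_divide power_mult_distrib)
  moreover have "2*e*(1-c)/(1-e)^2 < 4*e/(1+e)^2"
  proof -
    have "2*e*((1-c)*(1+e)^2) < 2*e*(2*(1-e)^2)" using key e0 by simp
    then show ?thesis using d1 by (simp add: divide_simps algebra_simps)
  qed
  ultimately show ?thesis unfolding e_def by simp
qed


theorem lemma2p8:
  fixes h \<theta> :: real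
  assumes "0 < h" and "0 < \<theta>" and "\<theta> < pi"
  shows "\<exists>d>0. \<exists>r>0.
     (\<exists>x\<in>cone h \<theta>. cone_dist h \<theta> (cone_point h \<theta>) x = d) \<and>
     (\<forall>x\<in>cone h \<theta>. \<forall>y\<in>cone h \<theta>.
        cone_dist h \<theta> (cone_point h \<theta>) x = d \<and> cone_dist h \<theta> (cone_point h \<theta>) y = d \<longrightarrow>
        (\<forall>\<gamma>. cone_geodesic h \<theta> \<gamma> x y \<longrightarrow>
           (\<forall>t\<in>{0..cone_dist h \<theta> x y}. \<gamma> t \<notin> {p\<in>cone h \<theta>. cone_dist h \<theta> (cone_point h \<theta>) p < r})))"
proof -
  define c where "c = cos \<theta>"
  have c1: "-1 < c" unfolding c_def using cos_monotone_0_pi[of \<theta> pi] assms by simp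
  have c2: "c \<le> 1" unfolding c_def by simp
  define \<rho> where "\<rho> = min ((1 + c)/16) (tanh (h/2))"
  have th: "0 < tanh (h/2)" "tanh (h/2) < 1" using assms(1) by (auto simp: tanh_real_lt_1)
  have r0: "0 < \<rho>" "\<rho> < 1" "\<rho> \<le> tanh (h/2)" "\<rho> \<le> (1 + c)/16" unfolding \<rho>_def using th c1 by (auto simp: min_def)
  have r2: "\<rho>^2 \<le> (1 + c)/16"
  proof -
    have "\<rho>^2 \<le> \<rho>" using r0 by (simp add: power2_eq_square mult_left_le_one_le)
    then show ?thesis using r0 by linarith
  qed
  define K where "K = 2*\<rho>^2*(1-c)/(1-\<rho>^2)^2"
  define T where "T = 2*\<rho>/(1+\<rho>^2)"
  define Q where "Q = sqrt K"
  have KT: "K < T^2" unfolding K_def T_def by (rule choice_ineq[OF c1 c2 r0(1) r2])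
  have K0: "0 \<le> K" unfolding K_def using c2 by simp
  have T0: "0 < T" unfolding T_def using r0 by (simp add: add_pos_nonneg)
  have T1: "T < 1"
  proof -
    have "0 < (1 - \<rho>)^2" using r0 by simp
    then have "2*\<rho> < 1 + \<rho>^2" by (simp add: power2_eq_square algebra_simps)
    then show ?thesis unfolding T_def by (simp add: add_pos_nonneg)
  qed
  have Q0: "0 \<le> Q" unfolding Q_def using K0 by simp
  have QT: "Q < T" unfolding Q_def using KT T0 K0 by (metis real_sqrt_abs real_sqrt_less_mono abs_of_pos)
  define d where "d = 2 * artanh \<rho>"
  have dT: "d = artanh T" unfolding d_def T_def using r0 artanh_double[of \<rho>] by simp
  have aQ: "artanh Q < d" unfolding dT using Q0 QT T1 by (intro artanh_mono_less) auto
  have aQ0: "0 \<le> artanh Q" using Q0 QT T1 by (intro artanh_nonneg) auto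
  define r where "r = (d - artanh Q)/2"
  have d0: "0 < d" unfolding d_def using artanh_pos[OF r0(1,2)] by simp
  have rpos: "0 < r" unfolding r_def using aQ by simp
  have h0: "0 \<le> h" "0 \<le> \<theta>" using assms by auto
  have \<rho>sec: "complex_of_real \<rho> \<in> sector h \<theta>"
  proof -
    have "dD 0 (complex_of_real \<rho>) = 2 * artanh \<rho>" using r0 by (simp add: dD_0)
    also have "\<dots> \<le> 2 * artanh (tanh (h/2))" using r0 th by (intro mult_left_mono artanh_mono_le) auto
    also have "\<dots> = h" by (simp add: artanh_tanh_real)
    finally have "dD 0 (complex_of_real \<rho>) \<le> h" .
    moreover have "complex_of_real \<rho> = complex_of_real \<rho> * cis 0" by simp
    ultimately show ?thesis unfolding sector_def mem_Collect_eq using r0 h0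
      by (intro conjI exI[of _ \<rho>] exI[of _ 0]) auto
  qed
  have Dsec: "cone_dist h \<theta> (cone_point h \<theta>) (cone_rel h \<theta> `` {u}) = 2 * artanh (cmod u)"
    if "u \<in> sector h \<theta>" for u
    using D_eq[OF h0 that] by (simp add: dD_0)
  have modeq: "cmod u = \<rho>" if "u \<in> sector h \<theta>" "2 * artanh (cmod u) = d" for u
  proof -
    have u1: "cmod u < 1" using sector_disk that(1) by blast
    have u0: "-1 < cmod u" by (smt (verit) norm_ge_zero)
    show ?thesis
    proof (rule ccontr)
      assume "cmod u \<noteq> \<rho>"
      then consider "cmod u < \<rho>" | "\<rho> < cmod u" by linarith
      then show False
      proof cases
        case 1
        then have "artanh (cmod u) < artanh \<rho>" using r0 u0 by (intro artanh_mono_less) auto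
        then show False using that(2) unfolding d_def by simp
      next
        case 2
        then have "artanh \<rho> < artanh (cmod u)" using r0 u1 u0 by (intro artanh_mono_less) auto
        then show False using that(2) unfolding d_def by simp
      qed
    qed
  qed
  show ?thesis
  proof (rule exI[of _ d], rule conjI[OF d0], rule exI[of _ r], intro conjI rpos ballI allI impI)
    show "\<exists>x\<in>cone h \<theta>. cone_dist h \<theta> (cone_point h \<theta>) x = d"
      using Dsec[OF \<rho>sec] \<rho>sec r0 unfolding cone_def d_def by (intro bexI[of _ "cone_rel h \<theta> `` {complex_of_real \<rho>}"] quotientI) auto
  next
    fix x y \<gamma> t
    assume x: "x \<in> cone h \<theta>" and y: "y \<in> cone h \<theta>"
      and dxy: "cone_dist h \<theta> (cone_point h \<theta>) x = d \<and> cone_dist h \<theta> (cone_point h \<theta>) y = d"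
      and g: "cone_geodesic h \<theta> \<gamma> x y" and t: "t \<in> {0..cone_dist h \<theta> x y}"
    show "\<gamma> t \<notin> {p \<in> cone h \<theta>. cone_dist h \<theta> (cone_point h \<theta>) p < r}"
    proof
      assume "\<gamma> t \<in> {p \<in> cone h \<theta>. cone_dist h \<theta> (cone_point h \<theta>) p < r}"
      then have gt: "\<gamma> t \<in> cone h \<theta>" "cone_dist h \<theta> (cone_point h \<theta>) (\<gamma> t) < r" by auto
      obtain z where z: "x = cone_rel h \<theta> `` {z}" "z \<in> sector h \<theta>" using x unfolding cone_def by (rule quotientE)
      obtain w where w: "y = cone_rel h \<theta> `` {w}" "w \<in> sector h \<theta>" using y unfolding cone_def by (rule quotientE)
      obtain u where u: "\<gamma> t = cone_rel h \<theta> `` {u}" "u \<in> sector h \<theta>" using gt(1) unfolding cone_def by (rule quotientE)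
      define L where "L = cone_dist h \<theta> x y"
      have zr: "cmod z = \<rho>" using modeq[OF z(2)] Dsec[OF z(2)] dxy z(1) by simp
      have wr: "cmod w = \<rho>" using modeq[OF w(2)] Dsec[OF w(2)] dxy w(1) by simp
      have dz: "dD 0 z = d" "dD 0 w = d" using zr wr unfolding d_def by (simp_all add: dD_0)
      have du: "dD 0 u < r" using gt(2) D_eq[OF h0 u(2)] u(1) by simp
      have t0: "0 \<le> t" "t \<le> L" using t unfolding L_def by auto
      have g0: "\<gamma> 0 = x" "\<gamma> L = y" using g unfolding cone_geodesic_def L_def by auto
      have gd: "cone_dist h \<theta> (\<gamma> t) (\<gamma> 0) = t" "cone_dist h \<theta> (\<gamma> t) (\<gamma> L) = L - t"
      proof -
        have ga: "\<forall>s\<in>{0..L}. \<forall>t\<in>{0..L}. cone_dist h \<theta> (\<gamma> s) (\<gamma> t) = \<bar>s - t\<bar>"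
          using g unfolding cone_geodesic_def L_def by blast
        have m: "t \<in> {0..L}" "0 \<in> {0..L}" "L \<in> {0..L}" using t0 by auto
        show "cone_dist h \<theta> (\<gamma> t) (\<gamma> 0) = t" using ga m t0 by simp
        show "cone_dist h \<theta> (\<gamma> t) (\<gamma> L) = L - t" using ga m t0 by simp
      qed
      have i1: "d - dD 0 u \<le> t"
        using cone_dist_lower[OF u(2) z(2)] gd(1) g0(1) z(1) u(1) dz by simp
      have i2: "d - dD 0 u \<le> L - t"
        using cone_dist_lower[OF u(2) w(2)] gd(2) g0(2) w(1) u(1) dz by simp
      have Lz: "L \<le> dD z w" unfolding L_def z(1) w(1)
        using z(2) w(2) rel_refl by (intro cone_dist_upper) auto
      define q where "q = cmod (z - w) / cmod (1 - cnj z * w)"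
      have q01: "0 \<le> q" "q < 1" unfolding q_def using dD_ratio[OF sector_disk[OF z(2)] sector_disk[OF w(2)]] by auto
      have qK: "q^2 \<le> K" unfolding q_def K_def c_def
        using geo_bound[OF _ z(2) w(2) zr wr r0(2)] assms(3) by simp
      have qQ: "q \<le> Q" unfolding Q_def using qK q01 real_le_rsqrt by blast
      have "dD z w = 2 * artanh q" unfolding dD_def q_def ..
      also have "\<dots> \<le> 2 * artanh Q" using qQ q01 QT T1 by (intro mult_left_mono artanh_mono_le) auto
      finally have "L \<le> 2 * artanh Q" using Lz by simp
      then show False using i1 i2 du aQ unfolding r_def by argo
    qed
  qed
qed


end
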